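(* Assume the setting below, on the Shishkin mesh $S_N$ (i.e. $\lambda=N$) with mesh parameter $a\ge a_*:=\dfrac{\beta}{b(0)-\beta}$. Then the truncation error of $v$ satisfies \[ |\tau_i[v]|\le C\begin{cases} N^{-2}(\ln N)^2e^{-\beta x_i/\varepsilon}, & 1\le i\le J-1,\\ N^{-a}, & J\le i\le N-1,\end{cases} \] with $C$ independent of $\varepsilon$ and $N$.
   Context: Let $0<\varepsilon<1$. Let $b,c,f\in C^4[0,1]$, and let $\beta$ be a constant with $b(x)>\beta>0$ and $c(x)\ge0$ on $[0,1]$. Let $u$ be the solution of $-\varepsilon u''-bu'+cu=f$ on $(0,1)$ with $u(0)=u(1)=0$. Define \[ v(x)=-\frac{\varepsilon u'(0)}{b(0)}e^{-b(0)x/\varepsilon}. \] Mesh $S_\lambda$, $\lambda\in\{N,\varepsilon^{-1}\}$. $N$ is a positive integer. $Q\in(0,1)$ is a fixed rational with $J=QN$ an integer, and $a>0$. Set $\xi=(a\varepsilon/\beta)\ln\lambda$, assumed $\le Q$, and $h=\xi/J$, $H=(1-\xi)/(N-J)$. The mesh points are $x_i=ih$ ($0\le i\le J$) and $x_i=\xi+(i-J)H$ ($J\le i\le N$). Write $h_i=x_i-x_{i-1}$ and $\hbar_i=(h_i+h_{i+1})/2$. Define $D^+g(x_i)=(g(x_{i+1})-g(x_i))/h_{i+1}$, $D^-g(x_i)=(g(x_i)-g(x_{i-1}))/h_i$, $D''g(x_i)=(D^+g(x_i)-D^-g(x_i))/\hbar_i$. Let $\sigma(\rho)=2\rho/(e^{2\rho}-1)$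 for $\rho>0$, $\sigma(0)=1$, and $\rho_i=b(x_i)h_{i+1}/(2\varepsilon)$. The truncation error of the ASI scheme is \[ \tau_i[g]=-\varepsilon\sigma(\rho_i)D''g(x_i)-b(x_i)D^+g(x_i)+\varepsilon g''(x_i)+b(x_i)g'(x_i),\qquad 1\le i\le N-1. \] *)

theory Defs
  imports "HOL-Analysis.Analysis"
begin

definition Ck_on01 :: "nat \<Rightarrow> (real \<Rightarrow> real) \<Rightarrow> bool" where
  "Ck_on01 k g \<longleftrightarrow> (\<exists>D :: nat \<Rightarrow> real \<Rightarrow> real.
      (\<forall>x\<in>{0..1}. D 0 x = g x) \<and>
      (\<forall>j\<le>k. continuous_on {0..1} (D j)) \<and>
      (\<forall>j<k. \<forall>x\<in>{0..1}. (D j has_real_derivative D (Suc j) x) (at x within {0..1})))"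

definition sh_xi :: "real \<Rightarrow> real \<Rightarrow> real \<Rightarrow> nat \<Rightarrow> real" where
  "sh_xi eps a beta N = (a * eps / beta) * ln (real N)"

text \<open>Mesh points x_i of S_N, with J = Q N fine intervals.\<close>
definition sh_mesh :: "real \<Rightarrow> real \<Rightarrow> real \<Rightarrow> nat \<Rightarrow> nat \<Rightarrow> nat \<Rightarrow> real" where
  "sh_mesh eps a beta N J i =
     (let xi = sh_xi eps a beta N; h = xi / real J; H = (1 - xi) / (real N - real J)
      in if i \<le> J then real i * h else xi + (real i - real J) * H)"

definition sigma :: "real \<Rightarrow> real" where
  "sigma r = (if r = 0 then 1 else 2 * r / (exp (2 * r) - 1))"

definition tau :: "real \<Rightarrow> (real \<Rightarrow> real) \<Rightarrow> (nat \<Rightarrow> real) \<Rightarrow> (real \<Rightarrow> real) \<Rightarrow> nat \<Rightarrow> real" where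
  "tau eps b x g i =
     (let hi = x i - x (i - 1); hi1 = x (Suc i) - x i; hb = (hi + hi1) / 2;
          Dp = (g (x (Suc i)) - g (x i)) / hi1;
          Dm = (g (x i) - g (x (i - 1))) / hi;
          D2 = (Dp - Dm) / hb;
          rho = b (x i) * hi1 / (2 * eps)
      in - eps * sigma rho * D2 - b (x i) * Dp
         + eps * deriv (deriv g) (x i) + b (x i) * deriv g (x i))"

end

theory Submission
  imports Defs
begin

lemma interior_deriv:
  fixes f :: "real \<Rightarrow> real"
  assumes "(f has_real_derivative D) (at x within {0..1})" "0 < x" "x < 1"
  shows "(f has_real_derivative D) (at x)"
proof -
  have "(f has_real_derivative D) (at x within {0<..<1})"
    by (rule DERIV_subset[OF assms(1)]) auto
  thus ?thesis using at_within_open[of x "{0<..<1}"] assms by auto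
qed

lemma cont_bound:
  fixes f :: "real \<Rightarrow> real"
  assumes "continuous_on {a..b} f"
  shows "\<exists>M. \<forall>x\<in>{a..b}. \<bar>f x\<bar> \<le> M"
proof -
  have "bounded (f ` {a..b})"
    using compact_imp_bounded[OF compact_continuous_image[OF assms compact_Icc]] .
  thus ?thesis unfolding bounded_real by auto
qed

lemma Ck4_facts:
  assumes "Ck_on01 4 g"
  shows "\<exists>g'. continuous_on {0..1} g \<and> continuous_on {0..1} g'
     \<and> (\<forall>x\<in>{0..1}. (g has_real_derivative g' x) (at x within {0..1}))"
proof -
  obtain D where D0: "\<forall>x\<in>{0..1}. D 0 x = g x"
    and Dc: "\<forall>j\<le>4. continuous_on {0..1} (D j)"
    and Dd: "\<forall>j<4. \<forall>x\<in>{0..1}. (D j has_real_derivative D (Suc j) x) (at x within {0..1})"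
    using assms unfolding Ck_on01_def by blast
  have "continuous_on {0..1} g"
    using continuous_on_cong[of "{0..1}" "{0..1}" "D 0" g] D0 Dc by auto
  moreover have "continuous_on {0..1} (D 1)" using Dc by auto
  moreover have "\<forall>x\<in>{0..1}. (g has_real_derivative D 1 x) (at x within {0..1})"
  proof
    fix x :: real assume x: "x \<in> {0..1}"
    have "(D 0 has_real_derivative D 1 x) (at x within {0..1})"
      using Dd x by (metis One_nat_def zero_less_numeral)
    thus "(g has_real_derivative D 1 x) (at x within {0..1})"
      by (rule has_field_derivative_transform_within[where d=1]) (use x D0 in auto)
  qed
  ultimately show ?thesis by blast
qed

lemma lip0:
  fixes g g' :: "real \<Rightarrow> real"
  assumes "\<forall>x\<in>{0..1}. (g has_real_derivative g' x) (at x within {0..1})"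
    and "\<forall>x\<in>{0..1}. \<bar>g' x\<bar> \<le> L" and "0 \<le> x" "x \<le> 1"
  shows "\<bar>g x - g 0\<bar> \<le> L * x"
proof -
  have "\<exists>y\<in>{0..x}. g x - g 0 = (\<lambda>h. h * g' y) (x - 0)"
  proof (rule mvt_very_simple)
    show "0 \<le> x" by fact
    fix y assume y: "0 \<le> y" "y \<le> x"
    have "(g has_real_derivative g' y) (at y within {0..x})"
      using DERIV_subset[of g "g' y" y "{0..1}" "{0..x}"] assms y by auto
    thus "(g has_derivative (\<lambda>h. h * g' y)) (at y within {0..x})"
      by (simp add: has_field_derivative_def mult.commute[of _ "g' y"])
  qed
  then obtain y where y: "y \<in> {0..x}" "g x - g 0 = x * g' y" by auto
  have "\<bar>g' y\<bar> \<le> L" using assms y by auto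
  hence "\<bar>g' y\<bar> * x \<le> L * x" using mult_right_mono assms(3) by blast
  thus ?thesis using y assms(3) by (simp add: abs_mult mult.commute)
qed

lemma maxprin:
  fixes w wd wdd p q :: "real \<Rightarrow> real" and eps :: real
  assumes eps: "eps > 0"
    and der: "\<forall>x\<in>{0..1}. (w has_real_derivative wd x) (at x within {0..1})
                   \<and> (wd has_real_derivative wdd x) (at x within {0..1})"
    and L: "\<forall>x\<in>{0<..<1}. q x \<ge> 0 \<and> - eps * wdd x - p x * wd x + q x * w x > 0"
    and b0: "w 0 \<ge> 0" and b1: "w 1 \<ge> 0"
  shows "\<forall>x\<in>{0..1}. w x \<ge> 0"
proof (rule ccontr)
  assume "\<not> (\<forall>x\<in>{0..1}. w x \<ge> 0)"
  then obtain y where y: "y \<in> {0..1}" "w y < 0" by force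
  have cont: "continuous_on {0..1} w"
    using der DERIV_continuous continuous_on_eq_continuous_within by blast
  obtain x0 where x0: "x0 \<in> {0..1}" "\<forall>z\<in>{0..1}. w x0 \<le> w z"
    using continuous_attains_inf[OF compact_Icc _ cont] by auto
  have neg: "w x0 < 0" using x0 y by force
  have i0: "0 < x0" using neg b0 x0 by (cases "x0 = 0") auto
  have i1: "x0 < 1" using neg b1 x0 by (cases "x0 = 1") auto
  have d1: "(w has_real_derivative wd x0) (at x0)"
    using interior_deriv der x0 i0 i1 by blast
  have d2: "(wd has_real_derivative wdd x0) (at x0)"
    using interior_deriv der x0 i0 i1 by blast
  have "wd x0 = 0"
  proof (rule DERIV_local_min[OF d1, of "min x0 (1 - x0)"])
    show "0 < min x0 (1 - x0)" using i0 i1 by auto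
    show "\<forall>y. \<bar>x0 - y\<bar> < min x0 (1 - x0) \<longrightarrow> w x0 \<le> w y"
      using x0 by (auto simp: abs_if split: if_splits)
  qed
  moreover have "q x0 \<ge> 0" "- eps * wdd x0 - p x0 * wd x0 + q x0 * w x0 > 0"
    using L i0 i1 by auto
  ultimately have "- eps * wdd x0 > 0"
    using neg mult_nonneg_nonpos[of "q x0" "w x0"] by auto
  hence w2n: "wdd x0 < 0" using eps by (simp add: mult_less_0_iff)
  obtain d where d: "d > 0" "\<forall>h>0. h < d \<longrightarrow> wd x0 < wd (x0 - h)"
    using DERIV_neg_dec_left[OF d2 w2n] by blast
  define h where "h = min (d/2) (x0/2)"
  have h: "0 < h" "h < d" "h < x0" using d i0 by (auto simp: h_def)
  have "\<exists>z. x0 - h < z \<and> z < x0 \<and> w x0 - w (x0 - h) = (x0 - (x0 - h)) * wd z"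
  proof (rule MVT2)
    show "x0 - h < x0" using h by auto
    fix z assume "x0 - h \<le> z" "z \<le> x0"
    thus "(w has_real_derivative wd z) (at z)"
      using interior_deriv der h i1 by auto
  qed
  then obtain z where z: "x0 - h < z" "z < x0" "w x0 - w (x0 - h) = h * wd z" by auto
  have "wd x0 < wd (x0 - (x0 - z))" 
  proof -
    have "x0 - z > 0" "x0 - z < d" using z h by auto
    thus ?thesis using d(2) by blast
  qed
  hence "wd z > 0" using \<open>wd x0 = 0\<close> by simp
  hence "w x0 > w (x0 - h)" using z(3) mult_pos_pos[OF h(1)] by fastforce
  moreover have "x0 - h \<in> {0..1}" using h i1 by auto
  ultimately show False using x0(2) by (meson not_le)
qed

lemma epsdu0_bound:
  fixes b b' c f u du ddu :: "real \<Rightarrow> real" and eps beta Mf Mb Mb1 Mc :: real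
  assumes beta: "beta > 0" and bpos: "\<forall>x\<in>{0..1}. b x > beta" and cpos: "\<forall>x\<in>{0..1}. c x \<ge> 0"
    and fM: "\<forall>x\<in>{0..1}. \<bar>f x\<bar> \<le> Mf" and bM: "\<forall>x\<in>{0..1}. \<bar>b x\<bar> \<le> Mb"
    and b1M: "\<forall>x\<in>{0..1}. \<bar>b' x\<bar> \<le> Mb1" and cM: "\<forall>x\<in>{0..1}. \<bar>c x\<bar> \<le> Mc"
    and bd: "\<forall>x\<in>{0..1}. (b has_real_derivative b' x) (at x within {0..1})"
    and eps: "eps > 0"
    and ud: "\<forall>x\<in>{0..1}. (u has_real_derivative du x) (at x within {0..1})
                   \<and> (du has_real_derivative ddu x) (at x within {0..1})"
    and ode: "\<forall>x\<in>{0<..<1}. - eps * ddu x - b x * du x + c x * u x = f x"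
    and u0: "u 0 = 0" and u1: "u 1 = 0"
  shows "\<bar>eps * du 0\<bar> \<le> Mb * ((Mf + 1) / beta) + (Mb1 * ((Mf + 1) / beta) + Mc * ((Mf + 1) / beta) + Mf)"
proof -
  define K where "K = (Mf + 1) / beta"
  have Kb: "beta * K = Mf + 1" using beta by (simp add: K_def)
  have Mf0: "Mf \<ge> 0" using fM[rule_format, of 0] by auto
  have K0: "K > 0" using beta Mf0 by (simp add: K_def)
  have key: "\<And>x. x \<in> {0<..<1} \<Longrightarrow> b x * K + c x * K * (1 - x) > Mf"
  proof -
    fix x :: real assume x: "x \<in> {0<..<1}"
    have "b x * K > beta * K" using bpos x K0 by auto
    moreover have "c x * K * (1 - x) \<ge> 0" using cpos x K0 by auto
    ultimately show "b x * K + c x * K * (1 - x) > Mf" using Kb by linarith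
  qed
  have ubound: "\<forall>x\<in>{0..1}. \<bar>u x\<bar> \<le> K"
  proof -
    have A: "\<forall>x\<in>{0..1}. K * (1 - x) - u x \<ge> 0"
    proof (rule maxprin[where eps=eps and wd="\<lambda>x. - K - du x" and wdd="\<lambda>x. - ddu x" and p=b and q=c])
      show "eps > 0" by fact
      show "\<forall>x\<in>{0..1}. ((\<lambda>x. K * (1 - x) - u x) has_real_derivative - K - du x) (at x within {0..1})
              \<and> ((\<lambda>x. - K - du x) has_real_derivative - ddu x) (at x within {0..1})"
        using ud by (auto intro!: derivative_eq_intros)
      show "\<forall>x\<in>{0<..<1}. 0 \<le> c x \<and> 0 < - eps * - ddu x - b x * (- K - du x) + c x * (K * (1 - x) - u x)"
      proof
        fix x :: real assume x: "x \<in> {0<..<1}"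
        have e: "- eps * ddu x - b x * du x + c x * u x = f x" using ode x by auto
        have "- eps * - ddu x - b x * (- K - du x) + c x * (K * (1 - x) - u x)
              = b x * K + c x * K * (1 - x) - f x" using e by (simp add: algebra_simps)
        moreover have "f x \<le> Mf" using fM[rule_format, of x] x by auto
        ultimately show "0 \<le> c x \<and> 0 < - eps * - ddu x - b x * (- K - du x) + c x * (K * (1 - x) - u x)"
          using key[OF x] cpos x by auto
      qed
    qed (use u0 u1 K0 in auto)
    have B: "\<forall>x\<in>{0..1}. K * (1 - x) + u x \<ge> 0"
    proof (rule maxprin[where eps=eps and wd="\<lambda>x. - K + du x" and wdd="\<lambda>x. ddu x" and p=b and q=c])
      show "eps > 0" by fact
      show "\<forall>x\<in>{0..1}. ((\<lambda>x. K * (1 - x) + u x) has_real_derivative - K + du x) (at x within {0..1})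
              \<and> ((\<lambda>x. - K + du x) has_real_derivative ddu x) (at x within {0..1})"
        using ud by (auto intro!: derivative_eq_intros)
      show "\<forall>x\<in>{0<..<1}. 0 \<le> c x \<and> 0 < - eps * ddu x - b x * (- K + du x) + c x * (K * (1 - x) + u x)"
      proof
        fix x :: real assume x: "x \<in> {0<..<1}"
        have e: "- eps * ddu x - b x * du x + c x * u x = f x" using ode x by auto
        have "- eps * ddu x - b x * (- K + du x) + c x * (K * (1 - x) + u x)
              = b x * K + c x * K * (1 - x) + f x" using e by (simp add: algebra_simps)
        moreover have "- f x \<le> Mf" using fM[rule_format, of x] x by auto
        ultimately show "0 \<le> c x \<and> 0 < - eps * ddu x - b x * (- K + du x) + c x * (K * (1 - x) + u x)"
          using key[OF x] cpos x by auto
      qed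
    qed (use u0 u1 K0 in auto)
    show ?thesis
    proof
      fix x :: real assume x: "x \<in> {0..1}"
      have "K * (1 - x) \<le> K" using K0 x by (simp add: mult_left_le)
      thus "\<bar>u x\<bar> \<le> K" using A B x by fastforce
    qed
  qed
  have ucont: "continuous_on {0..1} u"
    using ud DERIV_continuous continuous_on_eq_continuous_within by blast
  have dint: "\<And>x. 0 < x \<Longrightarrow> x < 1 \<Longrightarrow> (u has_real_derivative du x) (at x)"
    using ud interior_deriv by auto
  obtain l z where z: "0 < z" "z < 1" "(u has_real_derivative l) (at z)" "u 1 - u 0 = (1 - 0) * l"
    using MVT[of 0 1 u] ucont dint real_differentiable_def by (metis zero_less_one)
  have "l = du z" using DERIV_unique[OF z(3) dint[OF z(1,2)]] .
  hence duz: "du z = 0" using z u0 u1 by simp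
  define g where "g = (\<lambda>x. eps * du x + b x * u x)"
  have gd: "\<forall>x\<in>{0..1}. (g has_real_derivative eps * ddu x + (b' x * u x + b x * du x)) (at x within {0..1})"
    unfolding g_def using ud bd by (auto intro!: derivative_eq_intros)
  have gcont: "continuous_on {0..z} g"
    using continuous_on_subset[of "{0..1}" g "{0..z}"] gd DERIV_continuous continuous_on_eq_continuous_within z
    by (metis atLeastatMost_subset_iff order_refl less_imp_le)
  have gdi: "\<And>x. 0 < x \<Longrightarrow> x < z \<Longrightarrow> (g has_real_derivative eps * ddu x + (b' x * u x + b x * du x)) (at x)"
    using gd interior_deriv z by auto
  obtain l2 y where y: "0 < y" "y < z" "(g has_real_derivative l2) (at y)" "g z - g 0 = (z - 0) * l2"
    using MVT[of 0 z g] gcont gdi z real_differentiable_def by metis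
  have l2: "l2 = eps * ddu y + (b' y * u y + b y * du y)"
    using DERIV_unique[OF y(3) gdi[OF y(1,2)]] .
  have yi: "y \<in> {0<..<1}" "y \<in> {0..1}" using y z by auto
  have "l2 = b' y * u y + c y * u y - f y" using l2 ode yi(1) by (auto simp: algebra_simps)
  hence "\<bar>l2\<bar> \<le> \<bar>b' y\<bar> * \<bar>u y\<bar> + \<bar>c y\<bar> * \<bar>u y\<bar> + \<bar>f y\<bar>"
    by (simp add: abs_mult[symmetric])
  also have "\<dots> \<le> Mb1 * K + Mc * K + Mf"
    using b1M cM fM ubound yi(2) K0
    by (intro add_mono mult_mono) auto
  finally have l2b: "\<bar>l2\<bar> \<le> Mb1 * K + Mc * K + Mf" .
  have zl: "\<bar>z * l2\<bar> \<le> \<bar>l2\<bar>" using z by (simp add: abs_mult mult_left_le_one_le)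
  have Mb0: "Mb \<ge> 0" using bM[rule_format, of 0] by auto
  have gz: "\<bar>g z\<bar> \<le> Mb * K"
  proof -
    have "\<bar>g z\<bar> = \<bar>b z\<bar> * \<bar>u z\<bar>" using duz by (simp add: g_def abs_mult)
    also have "\<dots> \<le> Mb * K" using bM ubound z Mb0 by (intro mult_mono) auto
    finally show ?thesis .
  qed
  have "g 0 = eps * du 0" using u0 by (simp add: g_def)
  hence "\<bar>eps * du 0\<bar> \<le> \<bar>g z\<bar> + \<bar>z * l2\<bar>" using y(4) by simp
  hence "\<bar>eps * du 0\<bar> \<le> Mb * K + (Mb1 * K + Mc * K + Mf)" using gz zl l2b by linarith
  thus ?thesis unfolding K_def .
qed

definition EE :: "real \<Rightarrow> real" where "EE x = (exp x - 1) / x"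
definition EEd :: "real \<Rightarrow> real" where "EEd x = (x * exp x - exp x + 1) / x\<^sup>2"

lemma EE_deriv: "x \<noteq> 0 \<Longrightarrow> (EE has_real_derivative EEd x) (at x)"
  unfolding EE_def EEd_def
  by (auto intro!: derivative_eq_intros simp: power2_eq_square field_simps)

lemma EE_bounds:
  assumes "0 < x" "x \<le> X"
  shows "1 \<le> EE x" "EE x \<le> 1 + exp X * x / 2"
proof -
  obtain t where t: "\<bar>t\<bar> \<le> \<bar>x\<bar>" "exp x = (\<Sum>m<2. x ^ m / fact m) + exp t / fact 2 * x ^ 2"
    using Maclaurin_exp_le[of x 2] by blast
  have e: "exp x = 1 + x + exp t / 2 * x^2" using t(2) by (simp add: eval_nat_numeral)
  have EEx: "EE x = 1 + exp t * x / 2" using assms e by (simp add: EE_def field_simps power2_eq_square)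
  have "exp t \<le> exp X" using t assms by auto
  hence "exp t * x / 2 \<le> exp X * x / 2" using assms by (simp add: divide_right_mono mult_right_mono)
  thus "EE x \<le> 1 + exp X * x / 2" using EEx by simp
  show "1 \<le> EE x" using EEx assms by simp
qed

lemma EEd_bound:
  assumes "0 < x" "x \<le> X"
  shows "\<bar>EEd x - 1/2\<bar> \<le> x * (1/2 + (X + 1) * exp X / 6)"
proof -
  obtain t where t: "\<bar>t\<bar> \<le> \<bar>x\<bar>" "exp x = (\<Sum>m<3. x ^ m / fact m) + exp t / fact 3 * x ^ 3"
    using Maclaurin_exp_le[of x 3] by blast
  have e: "exp x = 1 + x + x^2/2 + exp t / 6 * x^3" using t(2) by (simp add: eval_nat_numeral)
  have EEx: "EEd x - 1/2 = x/2 + (x - 1) * exp t * x / 6"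
    using assms unfolding EEd_def e by (simp add: field_simps power2_eq_square power3_eq_cube)
  have et: "exp t \<le> exp X" using t assms by auto
  have "\<bar>(x - 1) * exp t * x / 6\<bar> = \<bar>x - 1\<bar> * exp t * x / 6" using assms by (simp add: abs_mult)
  also have "\<dots> \<le> (X + 1) * exp X * x / 6"
    using assms et by (intro divide_right_mono mult_right_mono mult_mono) auto
  finally have "\<bar>EEd x - 1/2\<bar> \<le> x/2 + (X + 1) * exp X * x / 6" using EEx assms by simp
  thus ?thesis by (simp add: algebra_simps)
qed

lemma a1_bound:
  assumes "0 < s" "s \<le> X"
  shows "\<bar>s/2 - (1 - EE (-s))\<bar> \<le> exp X * s\<^sup>2 / 6"
    and "\<bar>1 - EE (-s)\<bar> \<le> s * (1/2 + X * exp X / 6)"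
proof -
  obtain t where t: "\<bar>t\<bar> \<le> \<bar>-s\<bar>" "exp (-s) = (\<Sum>m<3. (-s) ^ m / fact m) + exp t / fact 3 * (-s) ^ 3"
    using Maclaurin_exp_le[of "-s" 3] by blast
  have e: "exp (-s) = 1 - s + s^2/2 - exp t / 6 * s^3" using t(2) by (simp add: eval_nat_numeral)
  have a: "s/2 - (1 - EE (-s)) = exp t * s\<^sup>2 / 6"
    using assms e by (simp add: EE_def field_simps power2_eq_square power3_eq_cube)
  have et: "exp t \<le> exp X" using t assms by auto
  show "\<bar>s/2 - (1 - EE (-s))\<bar> \<le> exp X * s\<^sup>2 / 6"
  proof -
    have "\<bar>s/2 - (1 - EE (-s))\<bar> = exp t * s\<^sup>2 / 6" unfolding a by simp
    also have "\<dots> \<le> exp X * s\<^sup>2 / 6" using et by (intro divide_right_mono mult_right_mono) auto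
    finally show ?thesis .
  qed
  have "exp t * s\<^sup>2 / 6 \<le> s * (X * exp X / 6)"
  proof -
    have "exp t * s\<^sup>2 \<le> exp X * (s * X)"
      using et assms by (intro mult_mono) (auto simp: power2_eq_square)
    thus ?thesis by (simp add: algebra_simps)
  qed
  moreover have "exp t * s\<^sup>2 / 6 \<ge> 0" by simp
  ultimately show "\<bar>1 - EE (-s)\<bar> \<le> s * (1/2 + X * exp X / 6)"
  proof -
    have c: "1 - EE (-s) = s/2 - exp t * s\<^sup>2 / 6" using a by linarith
    have d: "s * (1/2 + X * exp X / 6) = s/2 + s * (X * exp X / 6)" by (simp add: algebra_simps)
    have "s * (X * exp X / 6) \<ge> 0" using assms by simp
    thus ?thesis unfolding abs_le_iff c d using \<open>exp t * s\<^sup>2 / 6 \<le> s * (X * exp X / 6)\<close> \<open>exp t * s\<^sup>2 / 6 \<ge> 0\<close> assms by linarith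
  qed
qed

lemma EE_mvt:
  assumes s: "s > 0" and r: "r > 0"
  shows "\<exists>y. 0 < y \<and> y \<le> max 1 r * s \<and> EE (r * s) - EE s = (r - 1) * s * EEd y"
proof (cases "r = 1")
  case True thus ?thesis using s by (intro exI[of _ s]) auto
next
  case False
  show ?thesis
  proof (cases "r > 1")
    case True
    have "s < r * s" using True s by simp
    have der: "\<And>x. s \<le> x \<Longrightarrow> x \<le> r * s \<Longrightarrow> (EE has_real_derivative EEd x) (at x)"
      using EE_deriv s by force
    obtain z where z: "s < z" "z < r * s" "EE (r * s) - EE s = (r * s - s) * EEd z"
      using MVT2[OF \<open>s < r * s\<close> der] by blast
    show ?thesis using z True s by (intro exI[of _ z]) (auto simp: algebra_simps)
  next
    case f2: False
    hence "r * s < s" using False s r by simp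
    have der: "\<And>x. r * s \<le> x \<Longrightarrow> x \<le> s \<Longrightarrow> (EE has_real_derivative EEd x) (at x)"
      using EE_deriv s r by (metis mult_pos_pos order_less_le_trans less_irrefl)
    obtain z where z: "r * s < z" "z < s" "EE s - EE (r * s) = (s - r * s) * EEd z"
      using MVT2[OF \<open>r * s < s\<close> der] by blast
    have "0 < z" using z(1) r s by (meson mult_pos_pos less_trans)
    moreover have "z \<le> max 1 r * s" using z(2) s f2 by (simp add: max_def)
    moreover have "EE (r * s) - EE s = (r - 1) * s * EEd z" using z(3) by (simp add: algebra_simps)
    ultimately show ?thesis by blast
  qed
qed

lemma Hf_bound:
  assumes s: "s > 0" and r: "r > 0" "r \<le> Rm" and Rm: "1 \<le> Rm" and X: "Rm * s \<le> X"
  shows "\<bar>(1 - r) * (1 - EE (-s)) + EE (-s) * (EE (r * s) - EE s) / EE (r * s)\<bar>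
     \<le> (Rm * (1/2 + (X + 1) * exp X / 6) + exp X / 6 + (1/2 + X * exp X / 6) * exp X * Rm / 2
         + (1/2 + X * exp X / 6) * (1/2 + X * (1/2 + (X + 1) * exp X / 6))) * \<bar>r - 1\<bar> * s\<^sup>2"
proof -
  define c1 where "c1 = 1/2 + X * exp X / 6"
  define c2 where "c2 = 1/2 + (X + 1) * exp X / 6"
  have "1 * s \<le> Rm * s" using mult_right_mono[OF Rm, of s] s by simp
  hence sX: "s \<le> X" using X by simp
  have X0: "X > 0" using s sX by linarith
  have c10: "c1 \<ge> 0" "c2 \<ge> 0" using X0 by (auto simp: c1_def c2_def)
  have rs: "0 < r * s" "r * s \<le> Rm * s" using r s by auto
  have rsX: "r * s \<le> X" using rs X by linarith
  obtain y where y: "0 < y" "y \<le> max 1 r * s" "EE (r * s) - EE s = (r - 1) * s * EEd y"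
    using EE_mvt[OF s r(1)] by blast
  have "max 1 r \<le> Rm" using r Rm by simp
  hence "max 1 r * s \<le> Rm * s" using s by (simp add: mult_right_mono)
  hence yR: "y \<le> Rm * s" using y(2) by simp
  have yX: "y \<le> X" using yR X by linarith
  define a1 where "a1 = 1 - EE (-s)"
  define Er where "Er = EE (r * s)"
  have Er1: "1 \<le> Er" using EE_bounds(1)[OF rs(1) rsX] by (simp add: Er_def)
  have Er2: "\<bar>1 - Er\<bar> \<le> exp X * (Rm * s) / 2"
  proof -
    have "Er \<le> 1 + exp X * (r * s) / 2" using EE_bounds(2)[OF rs(1) rsX] by (simp add: Er_def)
    also have "exp X * (r * s) / 2 \<le> exp X * (Rm * s) / 2" using rs by (intro divide_right_mono mult_left_mono) auto
    finally show ?thesis using Er1 by linarith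
  qed
  have a1a: "\<bar>s/2 - a1\<bar> \<le> exp X * s\<^sup>2 / 6" using a1_bound(1)[OF s sX] by (simp add: a1_def)
  have a1b: "\<bar>a1\<bar> \<le> s * c1" using a1_bound(2)[OF s sX] by (simp add: a1_def c1_def)
  have Ed: "\<bar>EEd y - 1/2\<bar> \<le> y * c2" using EEd_bound[OF y(1) yX] by (simp add: c2_def)
  have Ed2: "\<bar>EEd y\<bar> \<le> 1/2 + X * c2"
  proof -
    have "y * c2 \<le> X * c2" using yX c10 by (simp add: mult_right_mono)
    thus ?thesis using Ed by linarith
  qed
  define Qv where "Qv = s * (EEd y - 1/2) + (s/2 - a1) + a1 * (1 - Er) - a1 * s * EEd y"
  have y3: "Er - EE s = (r - 1) * s * EEd y" using y(3) by (simp add: Er_def)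
  have num: "(1 - r) * a1 + (1 - a1) * (Er - EE s) / Er = (r - 1) * Qv / Er"
    using Er1 unfolding Qv_def y3 by (simp add: field_simps)
  have t1: "\<bar>s * (EEd y - 1/2)\<bar> \<le> Rm * c2 * s\<^sup>2"
  proof -
    have "\<bar>s * (EEd y - 1/2)\<bar> \<le> s * (y * c2)" using Ed s by (simp add: abs_mult mult_left_mono)
    also have "\<dots> \<le> s * (Rm * s * c2)" using yR s c10 by (intro mult_left_mono mult_right_mono) auto
    finally show ?thesis by (simp add: power2_eq_square algebra_simps)
  qed
  have t3: "\<bar>a1 * (1 - Er)\<bar> \<le> c1 * exp X * Rm / 2 * s\<^sup>2"
  proof -
    have "\<bar>a1 * (1 - Er)\<bar> \<le> (s * c1) * (exp X * (Rm * s) / 2)"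
      unfolding abs_mult using a1b Er2 by (intro mult_mono) auto
    thus ?thesis by (simp add: power2_eq_square algebra_simps)
  qed
  have t4: "\<bar>a1 * s * EEd y\<bar> \<le> c1 * (1/2 + X * c2) * s\<^sup>2"
  proof -
    have "\<bar>a1 * s * EEd y\<bar> = \<bar>a1\<bar> * s * \<bar>EEd y\<bar>" using s by (simp add: abs_mult)
    also have "\<dots> \<le> (s * c1) * s * (1/2 + X * c2)"
      using a1b Ed2 s c10 by (intro mult_mono) auto
    finally show ?thesis by (simp add: power2_eq_square algebra_simps)
  qed
  have Qb: "\<bar>Qv\<bar> \<le> (Rm * c2 + exp X / 6 + c1 * exp X * Rm / 2 + c1 * (1/2 + X * c2)) * s\<^sup>2"
  proof -
    have "\<bar>Qv\<bar> \<le> \<bar>s * (EEd y - 1/2)\<bar> + \<bar>s/2 - a1\<bar> + \<bar>a1 * (1 - Er)\<bar> + \<bar>a1 * s * EEd y\<bar>"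
      unfolding Qv_def by linarith
    also have "\<dots> \<le> Rm * c2 * s\<^sup>2 + exp X * s\<^sup>2 / 6 + c1 * exp X * Rm / 2 * s\<^sup>2 + c1 * (1/2 + X * c2) * s\<^sup>2"
      using t1 a1a t3 t4 by linarith
    finally show ?thesis by (simp add: algebra_simps)
  qed
  have "\<bar>(r - 1) * Qv / Er\<bar> \<le> \<bar>r - 1\<bar> * \<bar>Qv\<bar>"
  proof -
    have "\<bar>(r - 1) * Qv / Er\<bar> = \<bar>r - 1\<bar> * \<bar>Qv\<bar> / Er" using Er1 by (simp add: abs_mult)
    also have "\<dots> \<le> \<bar>r - 1\<bar> * \<bar>Qv\<bar>"
    proof -
      have "\<bar>r - 1\<bar> * \<bar>Qv\<bar> * 1 \<le> \<bar>r - 1\<bar> * \<bar>Qv\<bar> * Er" using Er1 by (intro mult_left_mono) auto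
      thus ?thesis using Er1 by (simp add: divide_le_eq)
    qed
    finally show ?thesis .
  qed
  also have "\<dots> \<le> \<bar>r - 1\<bar> * ((Rm * c2 + exp X / 6 + c1 * exp X * Rm / 2 + c1 * (1/2 + X * c2)) * s\<^sup>2)"
    using Qb by (simp add: mult_left_mono)
  finally have "\<bar>(1 - r) * a1 + (1 - a1) * (Er - EE s) / Er\<bar>
      \<le> (Rm * c2 + exp X / 6 + c1 * exp X * Rm / 2 + c1 * (1/2 + X * c2)) * \<bar>r - 1\<bar> * s\<^sup>2"
    unfolding num by (simp add: algebra_simps)
  thus ?thesis unfolding a1_def Er_def c1_def c2_def by simp
qed

lemma deriv_v:
  fixes A b0 eps :: real
  assumes eps0: "eps \<noteq> 0"
  shows "deriv (\<lambda>t. A * exp (- b0 * t / eps)) = (\<lambda>t. - (A * b0 / eps) * exp (- b0 * t / eps))"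
    and "deriv (deriv (\<lambda>t. A * exp (- b0 * t / eps))) = (\<lambda>t. A * (b0 / eps)^2 * exp (- b0 * t / eps))"
proof -
  show d1: "deriv (\<lambda>t. A * exp (- b0 * t / eps)) = (\<lambda>t. - (A * b0 / eps) * exp (- b0 * t / eps))"
  proof
    fix t
    show "deriv (\<lambda>t. A * exp (- b0 * t / eps)) t = - (A * b0 / eps) * exp (- b0 * t / eps)"
      by (rule DERIV_imp_deriv) (use eps0 in \<open>auto intro!: derivative_eq_intros simp: field_simps\<close>)
  qed
  show "deriv (deriv (\<lambda>t. A * exp (- b0 * t / eps))) = (\<lambda>t. A * (b0 / eps)^2 * exp (- b0 * t / eps))"
    unfolding d1
  proof
    fix t
    show "deriv (\<lambda>t. - (A * b0 / eps) * exp (- b0 * t / eps)) t = A * (b0 / eps)^2 * exp (- b0 * t / eps)"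
      by (rule DERIV_imp_deriv) (use eps0 in \<open>auto intro!: derivative_eq_intros simp: field_simps power2_eq_square\<close>)
  qed
qed

lemma exp_shift: fixes b0 y h eps :: real shows "exp (- b0 * (y + h) / eps) = exp (- b0 * y / eps) * exp (- b0 * h / eps)"
proof -
  have "- b0 * (y + h) = - b0 * y + - b0 * h" by (simp add: algebra_simps)
  hence "- b0 * (y + h) / eps = - b0 * y / eps + - b0 * h / eps" by (simp only: add_divide_distrib)
  thus ?thesis by (simp only: exp_add)
qed

lemma tau_v:
  fixes eps b0 A hm hp :: real and b :: "real \<Rightarrow> real" and x :: "nat \<Rightarrow> real"
  assumes eps: "eps > 0" and hm: "hm > 0" and hp: "hp > 0"
    and xm: "x (i - 1) = x i - hm" and xp: "x (Suc i) = x i + hp"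
  shows "tau eps b x (\<lambda>t. A * exp (- b0 * t / eps)) i = A * exp (- b0 * x i / eps) * (
     - eps * sigma (b (x i) * hp / (2 * eps)) * ((exp (- b0 * hp / eps) - 1) / hp - (1 - exp (b0 * hm / eps)) / hm) / ((hm + hp) / 2)
     - b (x i) * (exp (- b0 * hp / eps) - 1) / hp + (b0 / eps) * (b0 - b (x i)))"
proof -
  have e1: "exp (- b0 * (x i + hp) / eps) = exp (- b0 * x i / eps) * exp (- b0 * hp / eps)"
    by (rule exp_shift)
  have e2: "exp (- b0 * (x i - hm) / eps) = exp (- b0 * x i / eps) * exp (b0 * hm / eps)"
    using exp_shift[of b0 "x i" "- hm" eps] by simp
  show ?thesis
    unfolding tau_def Let_def deriv_v[OF less_imp_neq[OF eps, symmetric]] xm xp e1 e2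
    using eps hm hp by (simp add: field_simps power2_eq_square)
qed

lemma alg_fine:
  fixes s r eps b0 es er h :: real
  assumes s: "s > 0" and r: "r > 0" and eps: "eps > 0" and b0: "b0 > 0" and es: "es > 1" and er: "er > 1"
    and h: "h = s * eps / b0"
  shows "- eps * ((r * s) / (er - 1)) * ((1/es - 1)/h - (1 - es)/h) / ((h + h)/2) - (r * b0) * (1/es - 1)/h
           + (b0/eps) * (b0 - r * b0)
       = (b0\<^sup>2/eps) * ((1 - r) * (1 - (1/es - 1)/(-s)) + ((1/es - 1)/(-s)) * ((er - 1)/(r * s) - (es - 1)/s) / ((er - 1)/(r * s)))"
proof -
  have "er - 1 > 0" "es - 1 > 0" "es > 0" using es er by auto
  thus ?thesis using s r eps b0 unfolding h by (simp add: field_simps power2_eq_square)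
qed


lemma sigma_pos_le1:
  assumes "r > 0" shows "0 < sigma r" "sigma r \<le> 1"
proof -
  have e: "exp (2 * r) - 1 \<ge> 2 * r" using exp_ge_add_one_self[of "2*r"] by linarith
  have "2 * r > 0" using assms by simp
  thus "0 < sigma r" "sigma r \<le> 1" using e assms by (auto simp: sigma_def divide_le_eq)
qed

lemma fine_bracket:
  fixes eps h b0 bi :: real
  assumes eps: "eps > 0" and h: "h > 0" and b0: "b0 > 0" and bi: "bi > 0"
  shows "- eps * sigma (bi * h / (2 * eps)) * ((exp (- b0 * h / eps) - 1) / h - (1 - exp (b0 * h / eps)) / h) / ((h + h) / 2)
     - bi * (exp (- b0 * h / eps) - 1) / h + (b0 / eps) * (b0 - bi)
   = (b0\<^sup>2/eps) * ((1 - bi/b0) * (1 - EE (-(b0*h/eps))) + EE (-(b0*h/eps)) * (EE (bi/b0 * (b0*h/eps)) - EE (b0*h/eps)) / EE (bi/b0 * (b0*h/eps)))"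
proof -
  define s where "s = b0 * h / eps"
  define r where "r = bi / b0"
  have s0: "s > 0" using eps h b0 by (simp add: s_def)
  have r0: "r > 0" using bi b0 by (simp add: r_def)
  have hh: "h = s * eps / b0" using eps b0 by (simp add: s_def)
  have bir: "bi = r * b0" using b0 by (simp add: r_def)
  have rs: "r * s = bi * h / eps" using b0 by (simp add: r_def s_def)
  have sig: "sigma (bi * h / (2 * eps)) = (r * s) / (exp (r * s) - 1)"
    using rs bi h eps by (simp add: sigma_def)
  have em: "exp (- b0 * h / eps) = 1 / exp s" by (simp add: s_def exp_minus inverse_eq_divide)
  have ep: "exp (b0 * h / eps) = exp s" by (simp add: s_def)
  have es: "exp s > 1" using s0 by simp
  have er: "exp (r * s) > 1" using s0 r0 by simp
  have E1: "EE (-s) = (1 / exp s - 1) / (-s)" by (simp add: EE_def exp_minus inverse_eq_divide)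
  have E2: "EE (r * s) = (exp (r * s) - 1) / (r * s)" by (simp add: EE_def)
  have E3: "EE s = (exp s - 1) / s" by (simp add: EE_def)
  show ?thesis
    unfolding sig em ep s_def[symmetric] r_def[symmetric]
    unfolding E1 E2 E3 bir
    using alg_fine[OF s0 r0 eps b0 es er hh] by simp
qed

lemma texp:
  fixes t beta b0 :: real
  assumes "t \<ge> 0" "beta < b0"
  shows "exp (- b0 * t) * t \<le> exp (- beta * t) / (b0 - beta)"
proof -
  have d: "b0 - beta > 0" using assms by simp
  have "(b0 - beta) * t \<le> exp ((b0 - beta) * t)"
    using exp_ge_add_one_self[of "(b0 - beta) * t"] by linarith
  hence "(b0 - beta) * t * exp (- b0 * t) \<le> exp ((b0 - beta) * t) * exp (- b0 * t)"
    by (simp add: mult_right_mono)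
  also have "exp ((b0 - beta) * t) * exp (- b0 * t) = exp (- beta * t)"
    by (simp add: exp_add[symmetric] algebra_simps)
  finally show ?thesis using d by (simp add: le_divide_eq algebra_simps)
qed

definition KcF :: "real \<Rightarrow> real \<Rightarrow> real" where
  "KcF X Rm = (Rm * (1/2 + (X + 1) * exp X / 6) + exp X / 6 + (1/2 + X * exp X / 6) * exp X * Rm / 2
         + (1/2 + X * exp X / 6) * (1/2 + X * (1/2 + (X + 1) * exp X / 6)))"

lemma KcF_nonneg: "X \<ge> 0 \<Longrightarrow> Rm \<ge> 0 \<Longrightarrow> KcF X Rm \<ge> 0"
  unfolding KcF_def by (intro add_nonneg_nonneg mult_nonneg_nonneg) auto

definition fbr :: "real \<Rightarrow> real \<Rightarrow> real \<Rightarrow> real \<Rightarrow> real" where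
  "fbr eps h b0 bi = - eps * sigma (bi * h / (2 * eps)) * ((exp (- b0 * h / eps) - 1) / h - (1 - exp (b0 * h / eps)) / h) / ((h + h) / 2)
     - bi * (exp (- b0 * h / eps) - 1) / h + (b0 / eps) * (b0 - bi)"

lemma fine_bound:
  fixes eps h b0 bi A xi beta Mb Lb X :: real
  assumes eps: "eps > 0" and h: "h > 0" and beta: "beta > 0" "beta < b0" and bi: "bi > 0" "bi \<le> Mb"
    and b0M: "b0 \<le> Mb" and lip: "\<bar>bi - b0\<bar> \<le> Lb * xi" and xi: "xi \<ge> 0" and Lb0': "Lb \<ge> 0"
    and X: "Mb / b0 * (b0 * h / eps) \<le> X"
  shows "\<bar>A * exp (- b0 * xi / eps) * fbr eps h b0 bi\<bar>
     \<le> \<bar>A\<bar> * KcF X (Mb / b0) * b0 * Lb / (b0 - beta) * (b0 * h / eps)\<^sup>2 * exp (- beta * xi / eps)"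
proof -
  define s where "s = b0 * h / eps"
  define r where "r = bi / b0"
  have b0: "b0 > 0" using beta by simp
  have s0: "s > 0" using eps h b0 by (simp add: s_def)
  have r0: "r > 0" using bi b0 by (simp add: r_def)
  have rR: "r \<le> Mb / b0" using bi b0 by (simp add: r_def divide_right_mono)
  have R1: "1 \<le> Mb / b0" using b0M b0 by simp
  have Xs: "Mb / b0 * s \<le> X" using X by (simp add: s_def)
  have X0: "X \<ge> 0" using Xs R1 s0 by (smt (verit) mult_pos_pos)
  have Kc0: "KcF X (Mb / b0) \<ge> 0" using KcF_nonneg X0 R1 by simp
  have Lb0: "Lb * xi \<ge> 0" using lip by linarith
  have Hb: "\<bar>(1 - r) * (1 - EE (-s)) + EE (-s) * (EE (r * s) - EE s) / EE (r * s)\<bar>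
      \<le> KcF X (Mb / b0) * \<bar>r - 1\<bar> * s\<^sup>2"
    using Hf_bound[OF s0 r0 rR R1 Xs] unfolding KcF_def .
  have fb: "fbr eps h b0 bi = (b0\<^sup>2/eps) * ((1 - r) * (1 - EE (-s)) + EE (-s) * (EE (r * s) - EE s) / EE (r * s))"
    unfolding fbr_def r_def s_def using fine_bracket[OF eps h b0 bi(1)] .
  have r1: "\<bar>r - 1\<bar> \<le> Lb * xi / b0"
  proof -
    have "r - 1 = (bi - b0) / b0" using b0 by (simp add: r_def field_simps)
    hence "\<bar>r - 1\<bar> = \<bar>bi - b0\<bar> / b0" using b0 by simp
    thus ?thesis using lip b0 by (simp add: divide_right_mono)
  qed
  have "\<bar>fbr eps h b0 bi\<bar> \<le> (b0\<^sup>2/eps) * (KcF X (Mb / b0) * \<bar>r - 1\<bar> * s\<^sup>2)"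
  proof -
    have "\<bar>b0\<^sup>2/eps\<bar> = b0\<^sup>2/eps" using eps by simp
    moreover have "b0\<^sup>2/eps \<ge> 0" using eps by simp
    ultimately show ?thesis unfolding fb abs_mult using Hb by (metis mult_left_mono)
  qed
  also have "\<dots> \<le> (b0\<^sup>2/eps) * (KcF X (Mb / b0) * (Lb * xi / b0) * s\<^sup>2)"
    using r1 Kc0 eps by (intro mult_left_mono mult_right_mono) auto
  also have "\<dots> = KcF X (Mb / b0) * b0 * Lb * s\<^sup>2 * (xi / eps)"
    using b0 eps by (simp add: power2_eq_square field_simps)
  finally have fbb: "\<bar>fbr eps h b0 bi\<bar> \<le> KcF X (Mb / b0) * b0 * Lb * s\<^sup>2 * (xi / eps)" .
  have te: "exp (- b0 * (xi / eps)) * (xi / eps) \<le> exp (- beta * (xi / eps)) / (b0 - beta)"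
    using texp[of "xi / eps" beta b0] xi eps beta by simp
  have "\<bar>A * exp (- b0 * xi / eps) * fbr eps h b0 bi\<bar>
      = \<bar>A\<bar> * exp (- b0 * xi / eps) * \<bar>fbr eps h b0 bi\<bar>" by (simp add: abs_mult)
  also have "\<dots> \<le> \<bar>A\<bar> * exp (- b0 * xi / eps) * (KcF X (Mb / b0) * b0 * Lb * s\<^sup>2 * (xi / eps))"
    using fbb by (intro mult_left_mono) auto
  also have "\<dots> = \<bar>A\<bar> * (KcF X (Mb / b0) * b0 * Lb * s\<^sup>2) * (exp (- b0 * (xi / eps)) * (xi / eps))"
    by (simp add: algebra_simps)
  also have "\<dots> \<le> \<bar>A\<bar> * (KcF X (Mb / b0) * b0 * Lb * s\<^sup>2) * (exp (- beta * (xi / eps)) / (b0 - beta))"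
    using te Kc0 b0 Lb0' by (intro mult_left_mono) auto
  also have "\<dots> = \<bar>A\<bar> * KcF X (Mb / b0) * b0 * Lb / (b0 - beta) * s\<^sup>2 * exp (- beta * xi / eps)"
    by (simp add: algebra_simps)
  finally show ?thesis by (simp add: s_def)
qed

definition cbr :: "real \<Rightarrow> real \<Rightarrow> real \<Rightarrow> real \<Rightarrow> real \<Rightarrow> real" where
  "cbr eps hm hp b0 bi = - eps * sigma (bi * hp / (2 * eps)) * ((exp (- b0 * hp / eps) - 1) / hp - (1 - exp (b0 * hm / eps)) / hm) / ((hm + hp) / 2)
     - bi * (exp (- b0 * hp / eps) - 1) / hp + (b0 / eps) * (b0 - bi)"

lemma coarse_bound:
  fixes eps hm hp b0 bi xi beta Mb Lb :: real
  assumes eps: "eps > 0" and hm: "hm > 0" and hp: "hp > 0" and beta: "beta > 0" "beta < b0"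
    and bi: "bi > 0" "bi \<le> Mb" and lip: "\<bar>bi - b0\<bar> \<le> Lb * xi" and xi: "xi \<ge> 0" and Lb: "Lb \<ge> 0"
  shows "exp (- b0 * xi / eps) * \<bar>cbr eps hm hp b0 bi\<bar>
     \<le> (2 * b0 + Mb + 2 * b0 * exp (b0 * hm / eps)) * exp (- b0 * xi / eps) / hp
        + b0 * Lb / (b0 - beta) * exp (- beta * xi / eps)"
proof -
  have b0: "b0 > 0" using beta by simp
  define ep where "ep = exp (- b0 * hp / eps)"
  define em where "em = exp (b0 * hm / eps)"
  define sg where "sg = sigma (bi * hp / (2 * eps))"
  define hb where "hb = (hm + hp) / 2"
  define ew where "ew = exp (- b0 * xi / eps)"
  have ew0: "ew > 0" by (simp add: ew_def)
  have sg: "0 < sg" "sg \<le> 1" using sigma_pos_le1[of "bi * hp / (2 * eps)"] bi hp eps by (auto simp: sg_def)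
  have hb: "hb > 0" "hp \<le> 2 * hb" using hm hp by (auto simp: hb_def)
  have P1: "0 \<le> 1 - ep" "1 - ep \<le> b0 * hp / eps"
  proof -
    have "b0 * hp / eps \<ge> 0" using b0 hp eps by simp
    hence "ep \<le> 1" by (simp add: ep_def)
    thus "0 \<le> 1 - ep" by simp
    have "1 + (- b0 * hp / eps) \<le> ep" unfolding ep_def by (rule exp_ge_add_one_self)
    thus "1 - ep \<le> b0 * hp / eps" by simp
  qed
  have P2: "0 \<le> em - 1" "em - 1 \<le> (b0 * hm / eps) * em"
  proof -
    have y0: "b0 * hm / eps \<ge> 0" using b0 hm eps by simp
    thus "0 \<le> em - 1" by (simp add: em_def)
    have "1 - b0 * hm / eps \<le> exp (- (b0 * hm / eps))" using exp_ge_add_one_self[of "- (b0 * hm / eps)"] by simp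
    hence "(1 - b0 * hm / eps) * em \<le> exp (- (b0 * hm / eps)) * em" by (simp add: em_def)
    also have "\<dots> = 1" by (simp add: em_def exp_minus)
    finally show "em - 1 \<le> (b0 * hm / eps) * em" by (simp add: algebra_simps)
  qed
  have em1: "em \<ge> 1" using P2 by simp
  have cb: "cbr eps hm hp b0 bi = - eps * sg * ((ep - 1) / hp - (1 - em) / hm) / hb - bi * (ep - 1) / hp + (b0 / eps) * (b0 - bi)"
    by (simp add: cbr_def ep_def em_def sg_def hb_def)
  have T1: "eps * sg * ((1 - ep) / hp) / hb \<le> 2 * b0 / hp"
  proof -
    have "eps * sg * ((1 - ep) / hp) \<le> eps * 1 * ((b0 * hp / eps) / hp)"
      using sg P1 eps hp by (intro mult_mono divide_right_mono) auto
    also have "\<dots> = b0" using eps hp by simp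
    finally have "eps * sg * ((1 - ep) / hp) \<le> b0" .
    hence "eps * sg * ((1 - ep) / hp) / hb \<le> b0 / hb" by (rule divide_right_mono) (use hb in simp)
    also have "\<dots> \<le> 2 * b0 / hp" using hb hp b0 by (simp add: field_simps)
    finally show ?thesis .
  qed
  have T2: "eps * sg * ((em - 1) / hm) / hb \<le> 2 * b0 * em / hp"
  proof -
    have "eps * sg * ((em - 1) / hm) \<le> eps * 1 * (((b0 * hm / eps) * em) / hm)"
      using sg P2 eps hm by (intro mult_mono divide_right_mono) auto
    also have "\<dots> = b0 * em" using eps hm by simp
    finally have "eps * sg * ((em - 1) / hm) \<le> b0 * em" .
    hence "eps * sg * ((em - 1) / hm) / hb \<le> b0 * em / hb" by (rule divide_right_mono) (use hb in simp)
    also have "\<dots> \<le> 2 * b0 * em / hp" using hb hp b0 em1 by (simp add: field_simps)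
    finally show ?thesis .
  qed
  have T3: "bi * (1 - ep) / hp \<le> Mb / hp"
  proof -
    have "ep > 0" by (simp add: ep_def)
    hence "bi * (1 - ep) \<le> Mb * 1" using bi P1 by (intro mult_mono) auto
    thus ?thesis using hp by (simp add: divide_right_mono)
  qed
  have T4: "(b0 / eps) * \<bar>b0 - bi\<bar> \<le> b0 * Lb * (xi / eps)"
  proof -
    have "(b0 / eps) * \<bar>b0 - bi\<bar> \<le> (b0 / eps) * (Lb * xi)" using lip b0 eps by (intro mult_left_mono) auto
    thus ?thesis by (simp add: algebra_simps)
  qed
  have nn: "eps * sg * ((1 - ep) / hp) / hb \<ge> 0" "eps * sg * ((em - 1) / hm) / hb \<ge> 0" "bi * (1 - ep) / hp \<ge> 0"
    using eps sg P1 P2 hp hm hb bi by auto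
  have "\<bar>cbr eps hm hp b0 bi\<bar> \<le> eps * sg * ((1 - ep) / hp) / hb + eps * sg * ((em - 1) / hm) / hb
         + bi * (1 - ep) / hp + (b0 / eps) * \<bar>b0 - bi\<bar>"
  proof -
    have e: "cbr eps hm hp b0 bi = eps * sg * ((1 - ep) / hp) / hb - eps * sg * ((em - 1) / hm) / hb
         + bi * (1 - ep) / hp + (b0 / eps) * (b0 - bi)"
      unfolding cb using hp hm hb(1) by (simp add: field_simps)
    have "\<bar>(b0 / eps) * (b0 - bi)\<bar> = (b0 / eps) * \<bar>b0 - bi\<bar>" using b0 eps by (simp add: abs_mult)
    thus ?thesis unfolding e using nn by linarith
  qed
  also have "\<dots> \<le> 2 * b0 / hp + 2 * b0 * em / hp + Mb / hp + b0 * Lb * (xi / eps)"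
    using T1 T2 T3 T4 by linarith
  finally have cbb: "\<bar>cbr eps hm hp b0 bi\<bar> \<le> (2 * b0 + Mb + 2 * b0 * em) / hp + b0 * Lb * (xi / eps)"
    by (simp add: add_divide_distrib)
  have te: "exp (- b0 * (xi / eps)) * (xi / eps) \<le> exp (- beta * (xi / eps)) / (b0 - beta)"
    using texp[of "xi / eps" beta b0] xi eps beta by simp
  have "ew * \<bar>cbr eps hm hp b0 bi\<bar> \<le> ew * ((2 * b0 + Mb + 2 * b0 * em) / hp + b0 * Lb * (xi / eps))"
    using cbb ew0 by (intro mult_left_mono) auto
  also have "\<dots> = (2 * b0 + Mb + 2 * b0 * em) * ew / hp + b0 * Lb * (exp (- b0 * (xi / eps)) * (xi / eps))"
    by (simp add: ew_def algebra_simps)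
  also have "\<dots> \<le> (2 * b0 + Mb + 2 * b0 * em) * ew / hp + b0 * Lb * (exp (- beta * (xi / eps)) / (b0 - beta))"
    using te b0 Lb by (intro add_left_mono mult_left_mono) auto
  finally show ?thesis by (simp add: ew_def em_def algebra_simps)
qed

lemma mesh_basic:
  fixes eps a beta Q :: real and N J :: nat
  assumes eps: "0 < eps" and beta: "beta > 0" and a: "a > 0" and Q: "0 < Q" "Q < 1"
    and N: "N > 0" and J: "real J = Q * real N" and xiQ: "sh_xi eps a beta N \<le> Q"
  shows "1 \<le> J" "J < N" "0 < ln (real N)" "0 < sh_xi eps a beta N"
    "\<And>i. i \<le> J \<Longrightarrow> sh_mesh eps a beta N J i = real i * (sh_xi eps a beta N / real J)"
    "\<And>i. J \<le> i \<Longrightarrow> sh_mesh eps a beta N J i = sh_xi eps a beta N + (real i - real J) * ((1 - sh_xi eps a beta N) / (real N - real J))"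
    "(1 - sh_xi eps a beta N) / (real N - real J) > 0"
    "(1 - Q) / real N \<le> (1 - sh_xi eps a beta N) / (real N - real J)"
    "b0 * (sh_xi eps a beta N / real J) / eps = b0 * a / (beta * Q) * (ln (real N) / real N)"
    "ln (real N) / real N \<le> 1"
proof -
  have J0: "real J > 0" using J Q N by simp
  thus J1: "1 \<le> J" by simp
  have JNr: "real J < real N" using J Q N by simp
  thus JN: "J < N" by simp
  hence "real N \<ge> 2" using J1 by linarith
  thus lnN: "0 < ln (real N)" by simp
  show xi0: "0 < sh_xi eps a beta N" using lnN eps a beta by (simp add: sh_xi_def)
  show mi: "\<And>i. i \<le> J \<Longrightarrow> sh_mesh eps a beta N J i = real i * (sh_xi eps a beta N / real J)"
    by (simp add: sh_mesh_def Let_def)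
  show "\<And>i. J \<le> i \<Longrightarrow> sh_mesh eps a beta N J i = sh_xi eps a beta N + (real i - real J) * ((1 - sh_xi eps a beta N) / (real N - real J))"
  proof -
    fix i assume "J \<le> i"
    thus "sh_mesh eps a beta N J i = sh_xi eps a beta N + (real i - real J) * ((1 - sh_xi eps a beta N) / (real N - real J))"
      using J0 by (cases "i = J") (auto simp: sh_mesh_def Let_def)
  qed
  show H0: "(1 - sh_xi eps a beta N) / (real N - real J) > 0" using xiQ Q JNr by simp
  have "(1 - Q) / real N \<le> (1 - sh_xi eps a beta N) / real N" using xiQ N by (simp add: divide_right_mono)
  also have "\<dots> \<le> (1 - sh_xi eps a beta N) / (real N - real J)"
    using xiQ Q J0 JNr by (intro divide_left_mono) auto
  finally show "(1 - Q) / real N \<le> (1 - sh_xi eps a beta N) / (real N - real J)" .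
  show "b0 * (sh_xi eps a beta N / real J) / eps = b0 * a / (beta * Q) * (ln (real N) / real N)"
    unfolding J sh_xi_def using eps beta Q N by (simp add: field_simps)
  have "ln (real N) \<le> real N - 1" using ln_le_minus_one N by simp
  thus "ln (real N) / real N \<le> 1" using N by (simp add: divide_le_eq)
qed

lemma fine_case:
  fixes b :: "real \<Rightarrow> real" and eps a beta Q Mb Mb1 CA A :: real and N J i :: nat
  assumes eps: "0 < eps" and beta: "beta > 0" and a: "a > 0" and Q: "0 < Q" "Q < 1"
    and N: "N > 0" and J: "real J = Q * real N" and xiQ: "sh_xi eps a beta N \<le> Q"
    and bpos: "\<forall>x\<in>{0..1}. b x > beta" and Mb: "\<forall>x\<in>{0..1}. \<bar>b x\<bar> \<le> Mb"
    and lip: "\<forall>x\<in>{0..1}. \<bar>b x - b 0\<bar> \<le> Mb1 * x" and Mb10: "Mb1 \<ge> 0"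
    and A: "\<bar>A\<bar> \<le> CA / b 0" and i: "1 \<le> i" "i < J"
  shows "\<bar>tau eps b (sh_mesh eps a beta N J) (\<lambda>t. A * exp (- b 0 * t / eps)) i\<bar>
    \<le> CA / b 0 * KcF (Mb / b 0 * (b 0 * a / (beta * Q))) (Mb / b 0) * b 0 * Mb1 / (b 0 - beta) * (b 0 * a / (beta * Q))\<^sup>2
       * (ln (real N))\<^sup>2 / (real N)\<^sup>2 * exp (- beta * sh_mesh eps a beta N J i / eps)"
proof -
  note mb = mesh_basic[OF eps beta a Q N J xiQ]
  define xi where "xi = sh_xi eps a beta N"
  define h where "h = xi / real J"
  define x where "x = sh_mesh eps a beta N J"
  define X0 where "X0 = b 0 * a / (beta * Q)"
  define s where "s = b 0 * h / eps"
  have b0b: "beta < b 0" using bpos by auto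
  have b00: "b 0 > 0" using b0b beta by linarith
  have h0: "h > 0" using mb(1,4) by (simp add: h_def xi_def)
  have xi_: "x i = real i * h" using mb(5)[of i] i by (simp add: x_def h_def xi_def)
  have m1: "x (i - 1) = real (i - 1) * h" unfolding x_def h_def xi_def by (rule mb(5)) (use i in simp)
  have "real (i - 1) = real i - 1" using i by (simp add: of_nat_diff)
  hence xm: "x (i - 1) = x i - h" using m1 xi_ by (simp add: algebra_simps)
  have p1: "x (Suc i) = real (Suc i) * h" unfolding x_def h_def xi_def by (rule mb(5)) (use i in simp)
  hence xp: "x (Suc i) = x i + h" using xi_ by (simp add: algebra_simps)
  have xi_le: "x i \<le> xi"
  proof -
    have "real i * h \<le> real J * h" using i h0 by (simp add: mult_right_mono)
    also have "\<dots> = xi" using mb(1) by (simp add: h_def)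
    finally show ?thesis using xi_ by simp
  qed
  have xI: "x i \<in> {0..1}" using xi_le xiQ Q h0 xi_ by (simp add: xi_def)
  have bi: "b (x i) > 0" "b (x i) \<le> Mb" using bpos Mb xI beta by (auto dest!: bspec[of _ _ "x i"]) 
  have b0M: "b 0 \<le> Mb" using Mb[rule_format, of 0] by simp
  have lipi: "\<bar>b (x i) - b 0\<bar> \<le> Mb1 * x i" using lip xI by auto
  have sX: "s = X0 * (ln (real N) / real N)" using mb(9)[of "b 0"] by (simp add: s_def h_def xi_def X0_def)
  have X00: "X0 > 0" using b00 a beta Q by (simp add: X0_def)
  have "X0 * (ln (real N) / real N) \<le> X0 * 1" using mb(10) X00 by (intro mult_left_mono) auto
  hence sX0: "s \<le> X0" using sX by simp
  have Rm0: "Mb / b 0 \<ge> 0" using b0M b00 by simp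
  have XX: "Mb / b 0 * (b 0 * h / eps) \<le> Mb / b 0 * X0" using mult_left_mono[OF sX0 Rm0] by (simp add: s_def)
  have tv: "tau eps b x (\<lambda>t. A * exp (- b 0 * t / eps)) i = A * exp (- b 0 * x i / eps) * fbr eps h (b 0) (b (x i))"
    unfolding fbr_def by (rule tau_v[OF eps h0 h0 xm xp])
  have fb: "\<bar>A * exp (- b 0 * x i / eps) * fbr eps h (b 0) (b (x i))\<bar>
     \<le> \<bar>A\<bar> * KcF (Mb / b 0 * X0) (Mb / b 0) * b 0 * Mb1 / (b 0 - beta) * s\<^sup>2 * exp (- beta * x i / eps)"
    unfolding s_def using fine_bound[OF eps h0 beta(1) b0b bi b0M lipi _ Mb10 XX] xI by simp
  have K0: "KcF (Mb / b 0 * X0) (Mb / b 0) * b 0 * Mb1 / (b 0 - beta) * s\<^sup>2 * exp (- beta * x i / eps) \<ge> 0"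
  proof -
    have "KcF (Mb / b 0 * X0) (Mb / b 0) \<ge> 0" using KcF_nonneg[of "Mb / b 0 * X0" "Mb / b 0"] Rm0 X00 mult_nonneg_nonneg[OF Rm0, of X0] by simp
    thus ?thesis using b00 b0b Mb10 by (intro mult_nonneg_nonneg divide_nonneg_pos) auto
  qed
  have "\<bar>A\<bar> * KcF (Mb / b 0 * X0) (Mb / b 0) * b 0 * Mb1 / (b 0 - beta) * s\<^sup>2 * exp (- beta * x i / eps)
      = \<bar>A\<bar> * (KcF (Mb / b 0 * X0) (Mb / b 0) * b 0 * Mb1 / (b 0 - beta) * s\<^sup>2 * exp (- beta * x i / eps))"
    by simp
  also have "\<dots> \<le> CA / b 0 * (KcF (Mb / b 0 * X0) (Mb / b 0) * b 0 * Mb1 / (b 0 - beta) * s\<^sup>2 * exp (- beta * x i / eps))"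
    using A K0 by (rule mult_right_mono)
  also have "\<dots> = CA / b 0 * KcF (Mb / b 0 * X0) (Mb / b 0) * b 0 * Mb1 / (b 0 - beta) * X0\<^sup>2
       * (ln (real N))\<^sup>2 / (real N)\<^sup>2 * exp (- beta * x i / eps)"
    unfolding sX by (simp add: power2_eq_square field_simps)
  finally show ?thesis using tv fb unfolding x_def X0_def by simp
qed

lemma coarse_case:
  fixes b :: "real \<Rightarrow> real" and eps a beta Q Mb Mb1 CA A :: real and N J i :: nat
  assumes eps: "0 < eps" and beta: "beta > 0" and a: "a > 0" and Q: "0 < Q" "Q < 1"
    and N: "N > 0" and J: "real J = Q * real N" and xiQ: "sh_xi eps a beta N \<le> Q"
    and bpos: "\<forall>x\<in>{0..1}. b x > beta" and Mb: "\<forall>x\<in>{0..1}. \<bar>b x\<bar> \<le> Mb"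
    and lip: "\<forall>x\<in>{0..1}. \<bar>b x - b 0\<bar> \<le> Mb1 * x" and Mb10: "Mb1 \<ge> 0"
    and A: "\<bar>A\<bar> \<le> CA / b 0" and aa: "a \<ge> beta / (b 0 - beta)" and i: "J \<le> i" "i < N"
  shows "\<bar>tau eps b (sh_mesh eps a beta N J) (\<lambda>t. A * exp (- b 0 * t / eps)) i\<bar>
    \<le> CA / b 0 * ((4 * b 0 + Mb) * exp (b 0 * a / (beta * Q)) / (1 - Q) + b 0 * Mb1 / (b 0 - beta)) * real N powr (- a)"
proof -
  note mb = mesh_basic[OF eps beta a Q N J xiQ]
  define xi where "xi = sh_xi eps a beta N"
  define h where "h = xi / real J"
  define H where "H = (1 - xi) / (real N - real J)"
  define x where "x = sh_mesh eps a beta N J"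
  define X0 where "X0 = b 0 * a / (beta * Q)"
  define hm where "hm = (if i = J then h else H)"
  define P where "P = exp (- b 0 * xi / eps)"
  have b0b: "beta < b 0" using bpos by auto
  have b00: "b 0 > 0" using b0b beta by linarith
  have xi0: "xi > 0" using mb(4) by (simp add: xi_def)
  have h0: "h > 0" using mb(1,4) by (simp add: h_def xi_def)
  have H0: "H > 0" using mb(7) by (simp add: H_def xi_def)
  have hm0: "hm > 0" using h0 H0 by (simp add: hm_def)
  have xg: "\<And>j. J \<le> j \<Longrightarrow> x j = xi + (real j - real J) * H"
    unfolding x_def xi_def H_def by (rule mb(6))
  have xi_: "x i = xi + (real i - real J) * H" using xg i by simp
  have xp: "x (Suc i) = x i + H" using xg[of "Suc i"] xi_ i by (simp add: algebra_simps)
  have xJ: "x J = xi" using xg[of J] by simp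
  have xm: "x (i - 1) = x i - hm"
  proof (cases "i = J")
    case True
    have "x (J - 1) = real (J - 1) * h" unfolding x_def h_def xi_def by (rule mb(5)) simp
    moreover have "real (J - 1) = real J - 1" using mb(1) by (simp add: of_nat_diff)
    moreover have "real J * h = xi" using mb(1) by (simp add: h_def)
    ultimately show ?thesis using True xJ by (simp add: hm_def algebra_simps)
  next
    case False
    hence "J \<le> i - 1" "real (i - 1) = real i - 1" using i by (auto simp: of_nat_diff)
    thus ?thesis using xg[of "i - 1"] xi_ False by (simp add: hm_def algebra_simps)
  qed
  have iJ: "real i - real J \<ge> 0" using i by simp
  have xlow: "x i \<ge> xi" using xi_ iJ H0 by simp
  have xlow2: "x i - hm \<ge> xi - h"
  proof (cases "i = J")
    case True thus ?thesis using xJ by (simp add: hm_def)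
  next
    case False
    hence "real i - real J \<ge> 1" using i by linarith
    hence "(real i - real J) * H \<ge> 1 * H" using H0 by (intro mult_right_mono) auto
    thus ?thesis using xi_ False h0 by (simp add: hm_def)
  qed
  have xup: "x i \<le> 1"
  proof -
    have "(real i - real J) * H \<le> (real N - real J) * H" using i H0 by (intro mult_right_mono) auto
    also have "\<dots> = 1 - xi" using mb(2) by (simp add: H_def)
    finally show ?thesis using xi_ by simp
  qed
  have xI: "x i \<in> {0..1}" using xlow xup xi0 by simp
  have bi: "b (x i) > 0" "b (x i) \<le> Mb" using bpos Mb xI beta by (auto dest!: bspec[of _ _ "x i"])
  have lipi: "\<bar>b (x i) - b 0\<bar> \<le> Mb1 * x i" using lip xI by auto
  have tv: "tau eps b x (\<lambda>t. A * exp (- b 0 * t / eps)) i = A * exp (- b 0 * x i / eps) * cbr eps hm H (b 0) (b (x i))"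
    unfolding cbr_def by (rule tau_v[OF eps hm0 H0 xm xp])
  define ew where "ew = exp (- b 0 * x i / eps)"
  define em where "em = exp (b 0 * hm / eps)"
  have cb: "ew * \<bar>cbr eps hm H (b 0) (b (x i))\<bar>
     \<le> (2 * b 0 + Mb + 2 * b 0 * em) * ew / H + b 0 * Mb1 / (b 0 - beta) * exp (- beta * x i / eps)"
    unfolding ew_def em_def using coarse_bound[OF eps hm0 H0 beta b0b bi lipi _ Mb10] xI by simp
  have sX: "b 0 * h / eps \<le> X0"
  proof -
    have "b 0 * h / eps = X0 * (ln (real N) / real N)" using mb(9)[of "b 0"] by (simp add: h_def xi_def X0_def)
    also have "\<dots> \<le> X0 * 1" using mb(10) b00 a beta Q by (intro mult_left_mono) (auto simp: X0_def)
    finally show ?thesis by simp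
  qed
  have eX1: "exp X0 \<ge> 1" using b00 a beta Q by (simp add: X0_def)
  have ewP: "ew \<le> P" unfolding ew_def P_def using xlow b00 eps
    by (simp add: divide_right_mono mult_left_mono)
  have ewP2: "ew \<le> exp X0 * P" using ewP eX1 by (smt (verit) P_def exp_gt_zero mult_le_cancel_right1)
  have emew: "em * ew \<le> exp X0 * P"
  proof -
    have "em * ew = exp (- b 0 * (x i - hm) / eps)" unfolding em_def ew_def
      using eps by (simp add: exp_add[symmetric] field_simps)
    also have "\<dots> \<le> exp (- b 0 * (xi - h) / eps)" using xlow2 b00 eps
      by (simp add: divide_right_mono mult_left_mono)
    also have "\<dots> = exp (b 0 * h / eps) * P" unfolding P_def
      using eps by (simp add: exp_add[symmetric] field_simps)
    also have "\<dots> \<le> exp X0 * P" using sX by (simp add: P_def)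
    finally show ?thesis .
  qed
  have num: "(2 * b 0 + Mb + 2 * b 0 * em) * ew \<le> (4 * b 0 + Mb) * exp X0 * P"
  proof -
    have Mb0: "2 * b 0 + Mb \<ge> 0" using b00 Mb[rule_format, of 0] by simp
    have "(2 * b 0 + Mb + 2 * b 0 * em) * ew = (2 * b 0 + Mb) * ew + 2 * b 0 * (em * ew)" by (simp add: algebra_simps)
    also have "\<dots> \<le> (2 * b 0 + Mb) * (exp X0 * P) + 2 * b 0 * (exp X0 * P)"
      using ewP2 emew Mb0 b00 by (intro add_mono mult_left_mono) auto
    finally show ?thesis by (simp add: algebra_simps)
  qed
  have Hinv: "1 / H \<le> real N / (1 - Q)"
  proof -
    have le: "(1 - Q) / real N \<le> H" using mb(8) by (simp add: H_def xi_def)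
    have "(1 - Q) / real N > 0" using Q N by simp
    hence pos: "0 < H * ((1 - Q) / real N)" using H0 by (rule mult_pos_pos[rotated])
    have "1 / H \<le> 1 / ((1 - Q) / real N)" by (rule divide_left_mono[OF le _ pos]) simp
    thus ?thesis by simp
  qed
  have Npos: "real N > 0" using N by simp
  have PN: "P = real N powr (- (a * b 0 / beta))"
    unfolding P_def xi_def sh_xi_def powr_def using Npos eps beta by (simp add: field_simps)
  have expo: "1 - a * b 0 / beta \<le> - a"
  proof -
    have "beta \<le> a * (b 0 - beta)" using aa b0b by (simp add: divide_le_eq)
    hence "beta / beta \<le> a * (b 0 - beta) / beta" using beta by (intro divide_right_mono) auto
    thus ?thesis using beta by (simp add: field_simps)
  qed
  have PNa: "P * real N \<le> real N powr (- a)"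
  proof -
    have "real N powr (1 + - (a * b 0 / beta)) = real N powr 1 * real N powr (- (a * b 0 / beta))"
      by (rule powr_add)
    hence "P * real N = real N powr (1 - a * b 0 / beta)" unfolding PN using Npos by simp
    also have "\<dots> \<le> real N powr (- a)" using expo Npos by (intro powr_mono) auto
    finally show ?thesis .
  qed
  have ebN: "exp (- beta * x i / eps) \<le> real N powr (- a)"
  proof -
    have "exp (- beta * x i / eps) \<le> exp (- beta * xi / eps)" using xlow beta eps
      by (simp add: divide_right_mono mult_left_mono)
    also have "\<dots> = real N powr (- a)" unfolding xi_def sh_xi_def powr_def using Npos eps beta by (simp add: field_simps)
    finally show ?thesis .
  qed
  have t1: "(2 * b 0 + Mb + 2 * b 0 * em) * ew / H \<le> (4 * b 0 + Mb) * exp X0 / (1 - Q) * real N powr (- a)"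
  proof -
    have c0: "(4 * b 0 + Mb) * exp X0 \<ge> 0" using b00 Mb[rule_format, of 0] by simp
    have "(2 * b 0 + Mb + 2 * b 0 * em) * ew / H = ((2 * b 0 + Mb + 2 * b 0 * em) * ew) * (1 / H)" by simp
    also have "\<dots> \<le> ((4 * b 0 + Mb) * exp X0 * P) * (real N / (1 - Q))"
      by (rule mult_mono[OF num Hinv]) (use H0 c0 in \<open>auto simp: P_def\<close>)
    also have "\<dots> = (4 * b 0 + Mb) * exp X0 / (1 - Q) * (P * real N)" by simp
    also have "\<dots> \<le> (4 * b 0 + Mb) * exp X0 / (1 - Q) * real N powr (- a)"
      using PNa c0 Q by (intro mult_left_mono) auto
    finally show ?thesis .
  qed
  have t2: "b 0 * Mb1 / (b 0 - beta) * exp (- beta * x i / eps) \<le> b 0 * Mb1 / (b 0 - beta) * real N powr (- a)"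
    using ebN b00 b0b Mb10 by (intro mult_left_mono) auto
  have tot: "ew * \<bar>cbr eps hm H (b 0) (b (x i))\<bar>
      \<le> ((4 * b 0 + Mb) * exp X0 / (1 - Q) + b 0 * Mb1 / (b 0 - beta)) * real N powr (- a)"
    using cb t1 t2 by (simp add: algebra_simps)
  have "\<bar>tau eps b x (\<lambda>t. A * exp (- b 0 * t / eps)) i\<bar> = \<bar>A\<bar> * (ew * \<bar>cbr eps hm H (b 0) (b (x i))\<bar>)"
    unfolding tv ew_def by (simp add: abs_mult)
  also have "\<dots> \<le> CA / b 0 * (((4 * b 0 + Mb) * exp X0 / (1 - Q) + b 0 * Mb1 / (b 0 - beta)) * real N powr (- a))"
    by (rule mult_mono[OF A tot]) (use order_trans[OF abs_ge_zero A] in \<open>auto simp: ew_def\<close>)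
  finally show ?thesis unfolding x_def X0_def by simp
qed

theorem lemma1:
  fixes b c f :: "real \<Rightarrow> real" and beta Q a :: real
  assumes "Ck_on01 4 b" and "Ck_on01 4 c" and "Ck_on01 4 f"
    and "beta > 0" and "\<forall>x\<in>{0..1}. b x > beta" and "\<forall>x\<in>{0..1}. c x \<ge> 0"
    and "Q \<in> \<rat>" and "0 < Q" and "Q < 1"
    and "a > 0" and "a \<ge> beta / (b 0 - beta)"
  shows "\<exists>C. \<forall>eps N J u du ddu.
      0 < eps \<and> eps < 1 \<and> N > 0 \<and> real J = Q * real N
      \<and> sh_xi eps a beta N \<le> Q
      \<and> (\<forall>x\<in>{0..1}. (u has_real_derivative du x) (at x within {0..1})
                   \<and> (du has_real_derivative ddu x) (at x within {0..1}))
      \<and> continuous_on {0..1} ddu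
      \<and> (\<forall>x\<in>{0<..<1}. - eps * ddu x - b x * du x + c x * u x = f x)
      \<and> u 0 = 0 \<and> u 1 = 0
      \<longrightarrow> (let v = (\<lambda>t. - (eps * du 0 / b 0) * exp (- b 0 * t / eps));
               x = sh_mesh eps a beta N J
           in (\<forall>i. 1 \<le> i \<and> i < J \<longrightarrow>
                 \<bar>tau eps b x v i\<bar> \<le> C * (ln (real N))\<^sup>2 / (real N)\<^sup>2 * exp (- beta * x i / eps))
            \<and> (\<forall>i. J \<le> i \<and> i < N \<longrightarrow>
                 \<bar>tau eps b x v i\<bar> \<le> C * real N powr (- a)))"
proof -
  obtain b' where bc: "continuous_on {0..1} b" and b'c: "continuous_on {0..1} b'"
     and bd: "\<forall>x\<in>{0..1}. (b has_real_derivative b' x) (at x within {0..1})"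
    using Ck4_facts[OF assms(1)] by blast
  obtain c' where cc: "continuous_on {0..1} c" using Ck4_facts[OF assms(2)] by blast
  obtain f' where fc: "continuous_on {0..1} f" using Ck4_facts[OF assms(3)] by blast
  obtain Mb where Mb: "\<forall>x\<in>{0..1}. \<bar>b x\<bar> \<le> Mb" using cont_bound[OF bc] by blast
  obtain Mb1 where Mb1: "\<forall>x\<in>{0..1}. \<bar>b' x\<bar> \<le> Mb1" using cont_bound[OF b'c] by blast
  obtain Mc where Mc: "\<forall>x\<in>{0..1}. \<bar>c x\<bar> \<le> Mc" using cont_bound[OF cc] by blast
  obtain Mf where Mf: "\<forall>x\<in>{0..1}. \<bar>f x\<bar> \<le> Mf" using cont_bound[OF fc] by blast
  have Mb10: "Mb1 \<ge> 0" using Mb1[rule_format, of 0] by simp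
  have lip: "\<forall>x\<in>{0..1}. \<bar>b x - b 0\<bar> \<le> Mb1 * x"
  proof
    fix x :: real assume "x \<in> {0..1}"
    thus "\<bar>b x - b 0\<bar> \<le> Mb1 * x" using lip0[OF bd Mb1] by auto
  qed
  have b00: "b 0 > 0" using assms(4,5) by force
  define CA where "CA = Mb * ((Mf + 1) / beta) + (Mb1 * ((Mf + 1) / beta) + Mc * ((Mf + 1) / beta) + Mf)"
  define X0 where "X0 = b 0 * a / (beta * Q)"
  define Cf where "Cf = CA / b 0 * KcF (Mb / b 0 * X0) (Mb / b 0) * b 0 * Mb1 / (b 0 - beta) * X0\<^sup>2"
  define Cc where "Cc = CA / b 0 * ((4 * b 0 + Mb) * exp X0 / (1 - Q) + b 0 * Mb1 / (b 0 - beta))"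
  show ?thesis
  proof (rule exI[of _ "max Cf Cc"], intro allI impI)
    fix eps N J u du ddu
    assume H: "0 < eps \<and> eps < 1 \<and> N > 0 \<and> real J = Q * real N
      \<and> sh_xi eps a beta N \<le> Q
      \<and> (\<forall>x\<in>{0..1}. (u has_real_derivative du x) (at x within {0..1})
                   \<and> (du has_real_derivative ddu x) (at x within {0..1}))
      \<and> continuous_on {0..1} ddu
      \<and> (\<forall>x\<in>{0<..<1}. - eps * ddu x - b x * du x + c x * u x = f x)
      \<and> u 0 = 0 \<and> u 1 = 0"
    have eps: "0 < eps" and N: "N > 0" and J: "real J = Q * real N" and xiQ: "sh_xi eps a beta N \<le> Q"
      and ud: "\<forall>x\<in>{0..1}. (u has_real_derivative du x) (at x within {0..1})
                   \<and> (du has_real_derivative ddu x) (at x within {0..1})"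
      and ode: "\<forall>x\<in>{0<..<1}. - eps * ddu x - b x * du x + c x * u x = f x"
      and u0: "u 0 = 0" and u1: "u 1 = 0" using H by auto
    have e: "\<bar>eps * du 0\<bar> \<le> CA"
      using epsdu0_bound[OF assms(4) assms(5) assms(6) Mf Mb Mb1 Mc bd eps ud ode u0 u1] unfolding CA_def .
    have A: "\<bar>- (eps * du 0 / b 0)\<bar> \<le> CA / b 0"
      using e b00 by (simp add: divide_right_mono)
    show "let v = (\<lambda>t. - (eps * du 0 / b 0) * exp (- b 0 * t / eps));
               x = sh_mesh eps a beta N J
           in (\<forall>i. 1 \<le> i \<and> i < J \<longrightarrow>
                 \<bar>tau eps b x v i\<bar> \<le> max Cf Cc * (ln (real N))\<^sup>2 / (real N)\<^sup>2 * exp (- beta * x i / eps))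
            \<and> (\<forall>i. J \<le> i \<and> i < N \<longrightarrow>
                 \<bar>tau eps b x v i\<bar> \<le> max Cf Cc * real N powr (- a))"
      unfolding Let_def
    proof (intro conjI allI impI)
      fix i assume i: "1 \<le> i \<and> i < J"
      have "\<bar>tau eps b (sh_mesh eps a beta N J) (\<lambda>t. - (eps * du 0 / b 0) * exp (- b 0 * t / eps)) i\<bar>
         \<le> Cf * (ln (real N))\<^sup>2 / (real N)\<^sup>2 * exp (- beta * sh_mesh eps a beta N J i / eps)"
        using fine_case[OF eps assms(4) assms(10) assms(8) assms(9) N J xiQ assms(5) Mb lip Mb10 A] i
        unfolding Cf_def X0_def by blast
      also have "\<dots> \<le> max Cf Cc * (ln (real N))\<^sup>2 / (real N)\<^sup>2 * exp (- beta * sh_mesh eps a beta N J i / eps)"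
        by (intro mult_right_mono divide_right_mono) auto
      finally show "\<bar>tau eps b (sh_mesh eps a beta N J) (\<lambda>t. - (eps * du 0 / b 0) * exp (- b 0 * t / eps)) i\<bar>
         \<le> max Cf Cc * (ln (real N))\<^sup>2 / (real N)\<^sup>2 * exp (- beta * sh_mesh eps a beta N J i / eps)" .
    next
      fix i assume i: "J \<le> i \<and> i < N"
      have "\<bar>tau eps b (sh_mesh eps a beta N J) (\<lambda>t. - (eps * du 0 / b 0) * exp (- b 0 * t / eps)) i\<bar>
         \<le> Cc * real N powr (- a)"
        using coarse_case[OF eps assms(4) assms(10) assms(8) assms(9) N J xiQ assms(5) Mb lip Mb10 A assms(11)] i
        unfolding Cc_def X0_def by blast
      also have "\<dots> \<le> max Cf Cc * real N powr (- a)"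
        by (intro mult_right_mono) auto
      finally show "\<bar>tau eps b (sh_mesh eps a beta N J) (\<lambda>t. - (eps * du 0 / b 0) * exp (- b 0 * t / eps)) i\<bar>
         \<le> max Cf Cc * real N powr (- a)" .
    qed
  qed
qed

end
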